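(* Let $G$ be a graph with no massive edges and let $X=\{x_1,x_2,x_3,x_4\}\subseteq V(G)$ be the set of vertices with external momenta, all on-shell. Suppose $G$ has a $1$-separation $(A,B)$ with $A\cap B=\{v\}$, $X\cap(A\setminus\{v\})=\{x_1,x_2\}$ and $X\cap(B\setminus\{v\})=\{x_3,x_4\}$. Let $A'$ be $G[A]$ with the same external momenta and Schwinger parameters as in $G$ except that the momentum at $v$ is $\rho_{x_3}+\rho_{x_4}$, and let $B'$ be $G[B]$ with the same data as in $G$ except that the momentum at $v$ is $\rho_{x_1}+\rho_{x_2}$. Then $\phi_G=\phi_{A'}\psi_{B'}+\phi_{B'}\psi_{A'}$.
   Context: A $1$-separation is a pair $(A,B)$ with $A\cup B=V(G)$, $|A\cap B|\le1$ and no edge between $A\setminus B$ and $B\setminus A$. Each edge $e$ has a variable $\alpha_e$ and a mass $m_e$ (massive if $m_e\neq0$); each vertex $u$ has $\rho_u\in\mathbb{R}^4$, zero outside $X$, with $\sum_u\rho_u=0$. $\rho^2=\rho_1^2+\rho_2^2+\rho_3^2-\rho_4^2$ and $\rho_u$ is on-shell if $\rho_u^2=0$. $\psi_G=\sum_T\prod_{e\notin E(T)}\alpha_e$ over spanning trees $T$. A spanning 2-forest is an unordered pair $(T_1,T_2)$ of vertex-disjoint trees covering $V(G)$; $\rho^{H}=\sum_{u\in V(H)}\rho_u$; $\phi_G=\sum_{(T_1,T_2)}(\rho^{T_1})^2\prod_{e\notin E(T_1)\cup E(T_2)}\alpha_e+\psi_G\sum_e\alpha_em_e^2$. *)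

theory Defs
  imports "HOL-Analysis.Analysis"
begin

definition wf_graph :: "'v set \<Rightarrow> 'e set \<Rightarrow> ('e \<Rightarrow> 'v set) \<Rightarrow> bool" where
  "wf_graph V E ends \<longleftrightarrow> finite V \<and> finite E \<and>
     (\<forall>e\<in>E. ends e \<subseteq> V \<and> card (ends e) = 2)"

definition adj :: "('e \<Rightarrow> 'v set) \<Rightarrow> 'e set \<Rightarrow> ('v \<times> 'v) set" where
  "adj ends F = {(a, b). \<exists>e\<in>F. ends e = {a, b}}"

text \<open>An edge set is acyclic iff no edge lies on a cycle, i.e. removing any edge
  disconnects its endpoints.\<close>
definition acyclic_edges :: "('e \<Rightarrow> 'v set) \<Rightarrow> 'e set \<Rightarrow> bool" where
  "acyclic_edges ends F \<longleftrightarrow>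
     (\<forall>e\<in>F. \<forall>a b. ends e = {a, b} \<longrightarrow> (a, b) \<notin> (adj ends (F - {e}))\<^sup>*)"

definition is_tree :: "('e \<Rightarrow> 'v set) \<Rightarrow> 'v set \<Rightarrow> 'e set \<Rightarrow> bool" where
  "is_tree ends W F \<longleftrightarrow> W \<noteq> {} \<and> (\<forall>e\<in>F. ends e \<subseteq> W) \<and>
     (\<forall>u\<in>W. \<forall>w\<in>W. (u, w) \<in> (adj ends F)\<^sup>*) \<and> acyclic_edges ends F"

definition spanning_trees :: "'v set \<Rightarrow> 'e set \<Rightarrow> ('e \<Rightarrow> 'v set) \<Rightarrow> 'e set set" where
  "spanning_trees V E ends = {T. T \<subseteq> E \<and> is_tree ends V T}"

definition spanning_2forests ::
  "'v set \<Rightarrow> 'e set \<Rightarrow> ('e \<Rightarrow> 'v set) \<Rightarrow> ('v set \<times> 'e set) set set" where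
  "spanning_2forests V E ends =
     {{(W1, F1), (W2, F2)} | W1 F1 W2 F2.
        F1 \<subseteq> E \<and> F2 \<subseteq> E \<and> is_tree ends W1 F1 \<and> is_tree ends W2 F2 \<and>
        W1 \<inter> W2 = {} \<and> W1 \<union> W2 = V}"

definition mink_sq :: "real^4 \<Rightarrow> real" where
  "mink_sq x = (x$1)^2 + (x$2)^2 + (x$3)^2 - (x$4)^2"

definition psi :: "'v set \<Rightarrow> 'e set \<Rightarrow> ('e \<Rightarrow> 'v set) \<Rightarrow> ('e \<Rightarrow> real) \<Rightarrow> real" where
  "psi V E ends \<alpha> = (\<Sum>T\<in>spanning_trees V E ends. \<Prod>e\<in>E - T. \<alpha> e)"

text \<open>phi; for a 2-forest P, T1 is an (arbitrary) chosen member of the pair; the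
  value does not depend on the choice when the momenta sum to zero.\<close>
definition phi :: "'v set \<Rightarrow> 'e set \<Rightarrow> ('e \<Rightarrow> 'v set) \<Rightarrow> ('v \<Rightarrow> real^4)
     \<Rightarrow> ('e \<Rightarrow> real) \<Rightarrow> ('e \<Rightarrow> real) \<Rightarrow> real" where
  "phi V E ends \<rho> m \<alpha> =
     (\<Sum>P\<in>spanning_2forests V E ends.
        mink_sq (\<Sum>u\<in>fst (SOME t. t \<in> P). \<rho> u) * (\<Prod>e\<in>E - \<Union>(snd ` P). \<alpha> e))
     + psi V E ends \<alpha> * (\<Sum>e\<in>E. \<alpha> e * (m e)^2)"

definition induced_edges :: "'e set \<Rightarrow> ('e \<Rightarrow> 'v set) \<Rightarrow> 'v set \<Rightarrow> 'e set" where
  "induced_edges E ends A = {e\<in>E. ends e \<subseteq> A}"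

definition one_separation :: "'v set \<Rightarrow> 'e set \<Rightarrow> ('e \<Rightarrow> 'v set) \<Rightarrow> 'v set \<Rightarrow> 'v set \<Rightarrow> bool" where
  "one_separation V E ends A B \<longleftrightarrow> A \<union> B = V \<and> card (A \<inter> B) \<le> 1 \<and>
     \<not> (\<exists>e\<in>E. \<exists>a\<in>A - B. \<exists>b\<in>B - A. ends e = {a, b})"

end

theory Submission
  imports Defs
begin

lemma adj_Un: "adj ends (F \<union> G) = adj ends F \<union> adj ends G"
  unfolding adj_def by auto

lemma adj_mono: "F \<subseteq> G \<Longrightarrow> adj ends F \<subseteq> adj ends G"
  unfolding adj_def by auto

lemma adj_sub: "\<forall>e\<in>F. ends e \<subseteq> A \<Longrightarrow> adj ends F \<subseteq> A \<times> A"
  unfolding adj_def by auto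

lemma path_split:
  assumes RA: "RA \<subseteq> A \<times> A" and RB: "RB \<subseteq> B \<times> B" and AB: "A \<inter> B = {v}"
    and p: "(x, y) \<in> (RA \<union> RB)\<^sup>*" and x: "x \<in> A"
  shows "(y \<in> A \<and> (x, y) \<in> RA\<^sup>*) \<or> (y \<in> B \<and> (x, v) \<in> RA\<^sup>* \<and> (v, y) \<in> RB\<^sup>*)"
  using p
proof (induction rule: rtrancl_induct)
  case base
  then show ?case using x by auto
next
  case (step y z)
  from step.IH show ?case
  proof
    assume h: "y \<in> A \<and> (x, y) \<in> RA\<^sup>*"
    show ?thesis
    proof (cases "(y, z) \<in> RA")
      case True
      then show ?thesis using h RA by (auto intro: rtrancl_into_rtrancl)
    next
      case False
      then have yz: "(y, z) \<in> RB" using step.hyps(2) by auto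
      then have "y \<in> B" "z \<in> B" using RB by auto
      then have "y = v" using h AB by auto
      then show ?thesis using h yz \<open>z \<in> B\<close> by auto
    qed
  next
    assume h: "y \<in> B \<and> (x, v) \<in> RA\<^sup>* \<and> (v, y) \<in> RB\<^sup>*"
    show ?thesis
    proof (cases "(y, z) \<in> RB")
      case True
      then show ?thesis using h RB by (auto intro: rtrancl_into_rtrancl)
    next
      case False
      then have yz: "(y, z) \<in> RA" using step.hyps(2) by auto
      then have "y \<in> A" "z \<in> A" using RA by auto
      then have "y = v" using h AB by auto
      then show ?thesis using h yz \<open>z \<in> A\<close> by (auto intro: rtrancl_into_rtrancl)
    qed
  qed
qed

lemma path_A:
  assumes "RA \<subseteq> A \<times> A" "RB \<subseteq> B \<times> B" "A \<inter> B = {v}"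
    "(x, y) \<in> (RA \<union> RB)\<^sup>*" "x \<in> A" "y \<in> A"
  shows "(x, y) \<in> RA\<^sup>*"
  using path_split[OF assms(1-5)] assms(3,6) by auto

lemma path_stay:
  assumes "(x, y) \<in> (adj ends F)\<^sup>*" "x \<in> W" "\<forall>e\<in>F. ends e \<subseteq> W"
  shows "y \<in> W"
  using assms(1)
proof (induction rule: rtrancl_induct)
  case base then show ?case using assms(2) .
next
  case (step y z) then show ?case using assms(3) unfolding adj_def by auto
qed

lemma glue:
  assumes AB: "A \<inter> B = {v}" and F1: "\<forall>e\<in>F1. ends e \<subseteq> A" and F2: "\<forall>e\<in>F2. ends e \<subseteq> B"
  shows "is_tree ends (A \<union> B) (F1 \<union> F2) \<longleftrightarrow> is_tree ends A F1 \<and> is_tree ends B F2"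
proof -
  have s1: "\<And>e. adj ends (F1 - e) \<subseteq> A \<times> A" using F1 by (intro adj_sub) auto
  have s2: "\<And>e. adj ends (F2 - e) \<subseteq> B \<times> B" using F2 by (intro adj_sub) auto
  have s1': "adj ends F1 \<subseteq> A \<times> A" using F1 by (intro adj_sub) auto
  have s2': "adj ends F2 \<subseteq> B \<times> B" using F2 by (intro adj_sub) auto
  have BA: "B \<inter> A = {v}" using AB by auto
  have acyc: "acyclic_edges ends (F1 \<union> F2) \<longleftrightarrow> acyclic_edges ends F1 \<and> acyclic_edges ends F2"
  proof
    assume h: "acyclic_edges ends (F1 \<union> F2)"
    have m1: "\<And>e. (adj ends (F1 - {e}))\<^sup>* \<subseteq> (adj ends (F1 \<union> F2 - {e}))\<^sup>*"
      by (intro rtrancl_mono adj_mono) auto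
    have m2: "\<And>e. (adj ends (F2 - {e}))\<^sup>* \<subseteq> (adj ends (F1 \<union> F2 - {e}))\<^sup>*"
      by (intro rtrancl_mono adj_mono) auto
    show "acyclic_edges ends F1 \<and> acyclic_edges ends F2"
      using h m1 m2 unfolding acyclic_edges_def by blast
  next
    assume h: "acyclic_edges ends F1 \<and> acyclic_edges ends F2"
    show "acyclic_edges ends (F1 \<union> F2)"
      unfolding acyclic_edges_def
    proof (intro ballI allI impI notI)
      fix e a b
      assume e: "e \<in> F1 \<union> F2" and ab: "ends e = {a, b}"
        and p: "(a, b) \<in> (adj ends (F1 \<union> F2 - {e}))\<^sup>*"
      have eq: "adj ends (F1 \<union> F2 - {e}) = adj ends (F1 - {e}) \<union> adj ends (F2 - {e})"
        by (metis Un_Diff adj_Un)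
      show False
      proof (cases "e \<in> F1")
        case True
        then have "a \<in> A" "b \<in> A" using F1 ab by auto
        then have "(a, b) \<in> (adj ends (F1 - {e}))\<^sup>*"
          using path_A[OF s1 s2 AB] p eq by metis
        then show False using h True ab unfolding acyclic_edges_def by blast
      next
        case False
        then have e2: "e \<in> F2" using e by auto
        then have "a \<in> B" "b \<in> B" using F2 ab by auto
        then have "(a, b) \<in> (adj ends (F2 - {e}))\<^sup>*"
          using path_A[OF s2 s1 BA] p eq by (metis sup_commute)
        then show False using h e2 ab unfolding acyclic_edges_def by blast
      qed
    qed
  qed
  have eqU: "adj ends (F1 \<union> F2) = adj ends F1 \<union> adj ends F2" by (rule adj_Un)
  show ?thesis
  proof
    assume h: "is_tree ends (A \<union> B) (F1 \<union> F2)"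
    have c: "\<forall>u\<in>A \<union> B. \<forall>w\<in>A \<union> B. (u, w) \<in> (adj ends F1 \<union> adj ends F2)\<^sup>*"
      using h eqU unfolding is_tree_def by metis
    have cA: "\<forall>u\<in>A. \<forall>w\<in>A. (u, w) \<in> (adj ends F1)\<^sup>*"
      using c path_A[OF s1' s2' AB] by blast
    have cB: "\<forall>u\<in>B. \<forall>w\<in>B. (u, w) \<in> (adj ends F2)\<^sup>*"
      using c path_A[OF s2' s1' BA] by (metis UnCI sup_commute)
    show "is_tree ends A F1 \<and> is_tree ends B F2"
      using cA cB h acyc F1 F2 AB unfolding is_tree_def by auto
  next
    assume h: "is_tree ends A F1 \<and> is_tree ends B F2"
    have vA: "v \<in> A" "v \<in> B" using AB by auto
    have m1: "(adj ends F1)\<^sup>* \<subseteq> (adj ends (F1 \<union> F2))\<^sup>*" by (intro rtrancl_mono adj_mono) auto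
    have m2: "(adj ends F2)\<^sup>* \<subseteq> (adj ends (F1 \<union> F2))\<^sup>*" by (intro rtrancl_mono adj_mono) auto
    have cA: "\<forall>u\<in>A. (u, v) \<in> (adj ends (F1 \<union> F2))\<^sup>* \<and> (v, u) \<in> (adj ends (F1 \<union> F2))\<^sup>*"
      using h vA m1 unfolding is_tree_def by blast
    have cB: "\<forall>u\<in>B. (u, v) \<in> (adj ends (F1 \<union> F2))\<^sup>* \<and> (v, u) \<in> (adj ends (F1 \<union> F2))\<^sup>*"
      using h vA m2 unfolding is_tree_def by blast
    have "\<forall>u\<in>A \<union> B. \<forall>w\<in>A \<union> B. (u, w) \<in> (adj ends (F1 \<union> F2))\<^sup>*"
      using cA cB by (meson UnE rtrancl_trans)
    then show "is_tree ends (A \<union> B) (F1 \<union> F2)"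
      using h acyc F1 F2 unfolding is_tree_def by auto
  qed
qed


definition w2 :: "'e set \<Rightarrow> ('e \<Rightarrow> 'v set) \<Rightarrow> ('v \<Rightarrow> real^4) \<Rightarrow> ('e \<Rightarrow> real) \<Rightarrow> ('v set \<times> 'e set) set \<Rightarrow> real" where
  "w2 E ends \<rho> \<alpha> P = mink_sq (\<Sum>u\<in>fst (SOME t. t \<in> P). \<rho> u) * (\<Prod>e\<in>E - \<Union>(snd ` P). \<alpha> e)"

lemma phi_eq: "\<forall>e\<in>E. m e = 0 \<Longrightarrow> phi V E ends \<rho> m \<alpha> = (\<Sum>P\<in>spanning_2forests V E ends. w2 E ends \<rho> \<alpha> P)"
  unfolding phi_def w2_def by simp

lemma mink_neg: "mink_sq (- x) = mink_sq x"
  unfolding mink_sq_def by simp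

lemma obtain_2f:
  assumes "P \<in> spanning_2forests V E ends" "v \<in> V"
  obtains W1 F1 W2 F2 where "P = {(W1, F1), (W2, F2)}" "F1 \<subseteq> E" "F2 \<subseteq> E"
    "is_tree ends W1 F1" "is_tree ends W2 F2" "W1 \<inter> W2 = {}" "W1 \<union> W2 = V" "v \<in> W1" "v \<notin> W2"
proof -
  obtain W1 F1 W2 F2 where h: "P = {(W1, F1), (W2, F2)}" "F1 \<subseteq> E" "F2 \<subseteq> E"
    "is_tree ends W1 F1" "is_tree ends W2 F2" "W1 \<inter> W2 = {}" "W1 \<union> W2 = V"
    using assms(1) unfolding spanning_2forests_def by blast
  show ?thesis
  proof (cases "v \<in> W1")
    case True then show ?thesis using that h by blast
  next
    case False
    then have "v \<in> W2" using h assms(2) by blast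
    then show ?thesis using that[of W2 F2 W1 F1] h False by (auto simp: insert_commute)
  qed
qed

lemma mk_2f:
  assumes "F1 \<subseteq> E" "F2 \<subseteq> E" "is_tree ends W1 F1" "is_tree ends W2 F2" "W1 \<inter> W2 = {}" "W1 \<union> W2 = V"
  shows "{(W1, F1), (W2, F2)} \<in> spanning_2forests V E ends"
  unfolding spanning_2forests_def using assms by blast

lemma L_sym:
  assumes fin: "finite V" and s: "(\<Sum>u\<in>V. \<rho> u) = 0" and P: "P \<in> spanning_2forests V E ends"
    and t: "(W, F) \<in> P"
  shows "mink_sq (\<Sum>u\<in>fst (SOME t. t \<in> P). \<rho> u) = mink_sq (\<Sum>u\<in>W. \<rho> u)"
proof -
  obtain W1 F1 W2 F2 where h: "P = {(W1, F1), (W2, F2)}" "W1 \<inter> W2 = {}" "W1 \<union> W2 = V"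
    using P unfolding spanning_2forests_def by blast
  have f1: "finite W1" "finite W2" using fin h by auto
  have "(\<Sum>u\<in>V. \<rho> u) = (\<Sum>u\<in>W1. \<rho> u) + (\<Sum>u\<in>W2. \<rho> u)"
    using h f1 by (metis sum.union_disjoint)
  then have n: "(\<Sum>u\<in>W2. \<rho> u) = - (\<Sum>u\<in>W1. \<rho> u)" using s by (simp add: eq_neg_iff_add_eq_0 add.commute)
  have "(SOME t. t \<in> P) \<in> P" using t by (rule someI)
  then have a: "fst (SOME t. t \<in> P) = W1 \<or> fst (SOME t. t \<in> P) = W2" using h by auto
  have b: "W = W1 \<or> W = W2" using t h by auto
  show ?thesis using a b n mink_neg by metis
qed


locale sepctx =
  fixes V :: "'v set" and E :: "'e set" and ends :: "'e \<Rightarrow> 'v set" and A B :: "'v set" and v :: 'v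
  assumes finV: "finite V" and finE: "finite E"
    and wfE: "\<forall>e\<in>E. ends e \<subseteq> V \<and> card (ends e) = 2"
    and VAB: "V = A \<union> B" and AB: "A \<inter> B = {v}"
    and splitE: "\<forall>e\<in>E. ends e \<subseteq> A \<or> ends e \<subseteq> B"
begin

abbreviation "EA \<equiv> induced_edges E ends A"
abbreviation "EB \<equiv> induced_edges E ends B"

lemma EAB_disj: "EA \<inter> EB = {}"
proof (rule ccontr)
  assume "EA \<inter> EB \<noteq> {}"
  then obtain e where e: "e \<in> E" "ends e \<subseteq> A" "ends e \<subseteq> B" unfolding induced_edges_def by auto
  then have "ends e \<subseteq> {v}" using AB by auto
  then have "card (ends e) \<le> 1" by (metis card.empty card.insert card_mono finite.emptyI finite.insertI insert_absorb insert_not_empty le_SucI order_refl subset_singletonD One_nat_def)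
  then show False using wfE e by auto
qed

lemma E_split: "E = EA \<union> EB"
  using splitE unfolding induced_edges_def by auto

lemma EA_sub: "EA \<subseteq> E" "EB \<subseteq> E" unfolding induced_edges_def by auto

lemma EA_ends: "\<forall>e\<in>EA. ends e \<subseteq> A" "\<forall>e\<in>EB. ends e \<subseteq> B" unfolding induced_edges_def by auto

lemma vAB: "v \<in> A" "v \<in> B" using AB by auto

lemma finEA: "finite EA" "finite EB" using finE EA_sub finite_subset by auto

lemma prod_split:
  assumes "FA \<subseteq> EA" "FB \<subseteq> EB"
  shows "(\<Prod>e\<in>E - (FA \<union> FB). \<alpha> e) = (\<Prod>e\<in>EA - FA. \<alpha> e) * (\<Prod>e\<in>EB - FB. \<alpha> e)"
proof -
  have "E - (FA \<union> FB) = (EA - FA) \<union> (EB - FB)" using E_split EAB_disj assms by auto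
  moreover have "(EA - FA) \<inter> (EB - FB) = {}" using EAB_disj by auto
  ultimately show ?thesis using finEA by (simp add: prod.union_disjoint)
qed

lemma psi_prod: "psi V E ends \<alpha> = psi A EA ends \<alpha> * psi B EB ends \<alpha>"
proof -
  have "psi A EA ends \<alpha> * psi B EB ends \<alpha> =
     (\<Sum>(TA, TB)\<in>spanning_trees A EA ends \<times> spanning_trees B EB ends.
        (\<Prod>e\<in>EA - TA. \<alpha> e) * (\<Prod>e\<in>EB - TB. \<alpha> e))"
    unfolding psi_def sum_product sum.cartesian_product by simp
  also have "\<dots> = psi V E ends \<alpha>"
    unfolding psi_def
  proof (rule sum.reindex_bij_witness[where i="\<lambda>T. (T \<inter> EA, T \<inter> EB)" and j="\<lambda>(TA, TB). TA \<union> TB"])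
    fix a assume a: "a \<in> spanning_trees A EA ends \<times> spanning_trees B EB ends"
    then obtain TA TB where ab: "a = (TA, TB)" "TA \<subseteq> EA" "TB \<subseteq> EB" "is_tree ends A TA" "is_tree ends B TB"
      unfolding spanning_trees_def by auto
    have d: "(TA \<union> TB) \<inter> EA = TA" "(TA \<union> TB) \<inter> EB = TB" using ab EAB_disj by blast+
    show "((case a of (TA, TB) \<Rightarrow> TA \<union> TB) \<inter> EA, (case a of (TA, TB) \<Rightarrow> TA \<union> TB) \<inter> EB) = a"
      using ab(1) d by simp
    have e1: "\<forall>e\<in>TA. ends e \<subseteq> A" "\<forall>e\<in>TB. ends e \<subseteq> B" using ab(2,3) EA_ends by blast+
    have "is_tree ends (A \<union> B) (TA \<union> TB)"
      using glue[OF AB e1] ab(4,5) by simp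
    then show "(case a of (TA, TB) \<Rightarrow> TA \<union> TB) \<in> spanning_trees V E ends"
      using ab EA_sub VAB unfolding spanning_trees_def by auto
    show "(\<Prod>e\<in>E - (case a of (TA, TB) \<Rightarrow> TA \<union> TB). \<alpha> e) = (case a of (TA, TB) \<Rightarrow> (\<Prod>e\<in>EA - TA. \<alpha> e) * (\<Prod>e\<in>EB - TB. \<alpha> e))"
      using ab prod_split by auto
  next
    fix b assume b: "b \<in> spanning_trees V E ends"
    then have b0: "b \<subseteq> E" "is_tree ends V b" unfolding spanning_trees_def by auto
    have bb: "b = (b \<inter> EA) \<union> (b \<inter> EB)" using b0(1) E_split by blast
    have b1: "is_tree ends (A \<union> B) ((b \<inter> EA) \<union> (b \<inter> EB))"
      using b0(2) VAB bb by simp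
    show "(case (b \<inter> EA, b \<inter> EB) of (TA, TB) \<Rightarrow> TA \<union> TB) = b" using bb by simp
    have e1: "\<forall>e\<in>b \<inter> EA. ends e \<subseteq> A" "\<forall>e\<in>b \<inter> EB. ends e \<subseteq> B" using EA_ends by blast+
    have "is_tree ends A (b \<inter> EA) \<and> is_tree ends B (b \<inter> EB)"
      using glue[OF AB e1] b1 by simp
    then show "(b \<inter> EA, b \<inter> EB) \<in> spanning_trees A EA ends \<times> spanning_trees B EB ends"
      unfolding spanning_trees_def by auto
  qed
  finally show ?thesis by simp
qed


lemma half:
  assumes sV: "(\<Sum>u\<in>V. \<rho> u) = 0" and sA: "(\<Sum>u\<in>A. \<rho>' u) = 0"
    and agree: "\<forall>u\<in>A - {v}. \<rho>' u = \<rho> u"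
  shows "(\<Sum>Q\<in>{Q\<in>spanning_2forests V E ends. \<exists>(W, F)\<in>Q. v \<notin> W \<and> W \<subseteq> A}. w2 E ends \<rho> \<alpha> Q)
    = (\<Sum>P\<in>spanning_2forests A EA ends. w2 EA ends \<rho>' \<alpha> P) * psi B EB ends \<alpha>"
proof -
  have finA: "finite A" using finV VAB by auto
  define j :: "('v set \<times> 'e set) set \<times> 'e set \<Rightarrow> ('v set \<times> 'e set) set" where "j = (\<lambda>(P, TB). (\<lambda>(W, F). if v \<in> W then (W \<union> B, F \<union> TB) else (W, F)) ` P)"
  define i :: "('v set \<times> 'e set) set \<Rightarrow> ('v set \<times> 'e set) set \<times> 'e set" where "i = (\<lambda>Q. ((\<lambda>(W, F). (W \<inter> A, F \<inter> EA)) ` Q, \<Union>(snd ` Q) \<inter> EB))"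
  have "(\<Sum>P\<in>spanning_2forests A EA ends. w2 EA ends \<rho>' \<alpha> P) * psi B EB ends \<alpha> =
     (\<Sum>(P, TB)\<in>spanning_2forests A EA ends \<times> spanning_trees B EB ends.
        w2 EA ends \<rho>' \<alpha> P * (\<Prod>e\<in>EB - TB. \<alpha> e))"
    unfolding psi_def sum_product sum.cartesian_product by simp
  also have "\<dots> = (\<Sum>Q\<in>{Q\<in>spanning_2forests V E ends. \<exists>(W, F)\<in>Q. v \<notin> W \<and> W \<subseteq> A}. w2 E ends \<rho> \<alpha> Q)"
  proof (rule sum.reindex_bij_witness[where i=i and j=j])
    fix a assume a: "a \<in> spanning_2forests A EA ends \<times> spanning_trees B EB ends"
    then obtain P TB where aP: "a = (P, TB)" "P \<in> spanning_2forests A EA ends" "TB \<subseteq> EB" "is_tree ends B TB"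
      unfolding spanning_trees_def by auto
    obtain W1 F1 W2 F2 where P: "P = {(W1, F1), (W2, F2)}" "F1 \<subseteq> EA" "F2 \<subseteq> EA"
      "is_tree ends W1 F1" "is_tree ends W2 F2" "W1 \<inter> W2 = {}" "W1 \<union> W2 = A" "v \<in> W1" "v \<notin> W2"
      using obtain_2f[OF aP(2) vAB(1)] by blast
    have ja: "j a = {(W1 \<union> B, F1 \<union> TB), (W2, F2)}" using aP(1) P(1,8,9) unfolding j_def by simp
    have f1: "(W1 \<union> B) \<inter> A = W1" using P(7,8) AB by blast
    have f2: "(F1 \<union> TB) \<inter> EA = F1" using P(2) aP(3) EAB_disj by blast
    have f3: "W2 \<inter> A = W2" "F2 \<inter> EA = F2" using P(3,7) by blast+
    have f4: "(F1 \<union> TB \<union> F2) \<inter> EB = TB" using P(2,3) aP(3) EAB_disj by blast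
    have f5: "\<Union>(snd ` j a) = F1 \<union> TB \<union> F2" using ja by auto
    show "i (j a) = a" unfolding i_def using f5 f4 aP(1) P(1) ja f1 f2 f3 by simp
    have W1B: "W1 \<inter> B = {v}" using P(7,8) AB by blast
    have e1: "\<forall>e\<in>F1. ends e \<subseteq> W1" using P(4) unfolding is_tree_def by blast
    have e2: "\<forall>e\<in>TB. ends e \<subseteq> B" using aP(3) EA_ends by blast
    have t1: "is_tree ends (W1 \<union> B) (F1 \<union> TB)" using glue[OF W1B e1 e2] P(4) aP(4) by simp
    have jV: "j a \<in> spanning_2forests V E ends"
    proof -
      have "F1 \<union> TB \<subseteq> E" "F2 \<subseteq> E" using P(2,3) aP(3) EA_sub by blast+
      moreover have "(W1 \<union> B) \<inter> W2 = {}" using P(6,7,9) AB by blast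
      moreover have "(W1 \<union> B) \<union> W2 = V" using P(7) VAB by blast
      ultimately show ?thesis unfolding ja using mk_2f t1 P(5) by blast
    qed
    moreover have "(W2, F2) \<in> j a" "W2 \<subseteq> A" using ja P(7) by auto
    ultimately show "j a \<in> {Q\<in>spanning_2forests V E ends. \<exists>(W, F)\<in>Q. v \<notin> W \<and> W \<subseteq> A}"
      using P(9) by blast
    have m1: "mink_sq (\<Sum>u\<in>fst (SOME t. t \<in> j a). \<rho> u) = mink_sq (\<Sum>u\<in>W2. \<rho> u)"
      using L_sym[OF finV sV jV, of W2 F2] ja by simp
    have m2: "mink_sq (\<Sum>u\<in>fst (SOME t. t \<in> P). \<rho>' u) = mink_sq (\<Sum>u\<in>W2. \<rho>' u)"
      using L_sym[OF finA sA aP(2), of W2 F2] P(1) by simp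
    have m3: "(\<Sum>u\<in>W2. \<rho>' u) = (\<Sum>u\<in>W2. \<rho> u)"
      using agree P(7,9) by (intro sum.cong) auto
    have p1: "(\<Prod>e\<in>E - \<Union>(snd ` j a). \<alpha> e) = (\<Prod>e\<in>EA - (F1 \<union> F2). \<alpha> e) * (\<Prod>e\<in>EB - TB. \<alpha> e)"
    proof -
      have "\<Union>(snd ` j a) = (F1 \<union> F2) \<union> TB" using f5 by blast
      then show ?thesis using prod_split[of "F1 \<union> F2" TB \<alpha>] P(2,3) aP(3) by simp
    qed
    have p2: "\<Union>(snd ` P) = F1 \<union> F2" using P(1) by auto
    show "w2 E ends \<rho> \<alpha> (j a) = (case a of (P, TB) \<Rightarrow> w2 EA ends \<rho>' \<alpha> P * (\<Prod>e\<in>EB - TB. \<alpha> e))"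
      unfolding w2_def using aP(1) m1 m2 m3 p1 p2 by simp
  next
    fix b assume b: "b \<in> {Q\<in>spanning_2forests V E ends. \<exists>(W, F)\<in>Q. v \<notin> W \<and> W \<subseteq> A}"
    have vV: "v \<in> V" using vAB VAB by blast
    from b have bV: "b \<in> spanning_2forests V E ends" and bW: "\<exists>(W, F)\<in>b. v \<notin> W \<and> W \<subseteq> A" by auto
    obtain W1 F1 W2 F2 where P: "b = {(W1, F1), (W2, F2)}" "F1 \<subseteq> E" "F2 \<subseteq> E"
      "is_tree ends W1 F1" "is_tree ends W2 F2" "W1 \<inter> W2 = {}" "W1 \<union> W2 = V" "v \<in> W1" "v \<notin> W2"
      using obtain_2f[OF bV vV] by blast
    have W2A: "W2 \<subseteq> A" using bW P(1,8) by auto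
    have e2: "\<forall>e\<in>F2. ends e \<subseteq> W2" using P(5) unfolding is_tree_def by blast
    have F2A: "F2 \<subseteq> EA" using P(3) e2 W2A unfolding induced_edges_def by blast
    have P7: "W1 \<union> W2 = A \<union> B" using P(7) VAB by simp
    have BW1: "B \<subseteq> W1"
    proof
      fix x assume x: "x \<in> B"
      show "x \<in> W1"
      proof (rule ccontr)
        assume "x \<notin> W1"
        then have "x \<in> W2" using P7 x by blast
        then have "x \<in> A \<inter> B" using W2A x by blast
        then show False using AB P(9) \<open>x \<in> W2\<close> by simp
      qed
    qed
    have W1eq: "W1 = (W1 \<inter> A) \<union> B" using BW1 P7 by auto
    have F1eq: "F1 = (F1 \<inter> EA) \<union> (F1 \<inter> EB)" using P(2) E_split by blast
    have W1AB: "(W1 \<inter> A) \<inter> B = {v}" using P(8) AB by blast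
    have e1: "\<forall>e\<in>F1. ends e \<subseteq> W1" using P(4) unfolding is_tree_def by blast
    have e1a: "\<forall>e\<in>F1 \<inter> EA. ends e \<subseteq> W1 \<inter> A" using e1 EA_ends by blast
    have e1b: "\<forall>e\<in>F1 \<inter> EB. ends e \<subseteq> B" using EA_ends by blast
    have "is_tree ends ((W1 \<inter> A) \<union> B) ((F1 \<inter> EA) \<union> (F1 \<inter> EB))" using P(4) W1eq F1eq by simp
    then have tt: "is_tree ends (W1 \<inter> A) (F1 \<inter> EA)" "is_tree ends B (F1 \<inter> EB)"
      using glue[OF W1AB e1a e1b] by auto
    have F2B: "F2 \<inter> EB = {}" using F2A EAB_disj by blast
    have g1: "W2 \<inter> A = W2" "F2 \<inter> EA = F2" using W2A F2A by blast+
    have ib: "i b = ({(W1 \<inter> A, F1 \<inter> EA), (W2, F2)}, F1 \<inter> EB)"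
    proof -
      have "\<Union>(snd ` b) \<inter> EB = F1 \<inter> EB" using P(1) F2B by auto
      then show ?thesis unfolding i_def using P(1) g1 by simp
    qed
    have "{(W1 \<inter> A, F1 \<inter> EA), (W2, F2)} \<in> spanning_2forests A EA ends"
    proof -
      have "F1 \<inter> EA \<subseteq> EA" by blast
      moreover have "(W1 \<inter> A) \<inter> W2 = {}" using P(6) by blast
      moreover have "(W1 \<inter> A) \<union> W2 = A" using P7 W2A by auto
      ultimately show ?thesis using mk_2f tt(1) P(5) F2A by blast
    qed
    moreover have "F1 \<inter> EB \<in> spanning_trees B EB ends" using tt(2) unfolding spanning_trees_def by blast
    ultimately show "i b \<in> spanning_2forests A EA ends \<times> spanning_trees B EB ends" using ib by simp
    have "v \<in> W1 \<inter> A" using P(8) vAB by blast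
    then have "j (i b) = {((W1 \<inter> A) \<union> B, (F1 \<inter> EA) \<union> (F1 \<inter> EB)), (W2, F2)}"
      using ib P(9) unfolding j_def by simp
    then show "j (i b) = b" using P(1) W1eq F1eq by simp
  qed
  finally show ?thesis by simp
qed

lemma part_cover:
  assumes Q: "Q \<in> spanning_2forests V E ends"
  shows "(\<exists>(W, F)\<in>Q. v \<notin> W \<and> W \<subseteq> A) \<or> (\<exists>(W, F)\<in>Q. v \<notin> W \<and> W \<subseteq> B)"
proof -
  have vV: "v \<in> V" using vAB VAB by blast
  obtain W1 F1 W2 F2 where P: "Q = {(W1, F1), (W2, F2)}" "F1 \<subseteq> E" "F2 \<subseteq> E"
      "is_tree ends W1 F1" "is_tree ends W2 F2" "W1 \<inter> W2 = {}" "W1 \<union> W2 = V" "v \<in> W1" "v \<notin> W2"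
    using obtain_2f[OF Q vV] by blast
  have "W2 \<subseteq> A \<or> W2 \<subseteq> B"
  proof (rule ccontr)
    assume "\<not> (W2 \<subseteq> A \<or> W2 \<subseteq> B)"
    then obtain a b where ab: "a \<in> W2" "a \<notin> B" "b \<in> W2" "b \<notin> A" by blast
    have aA: "a \<in> A" using ab P(7) VAB by blast
    have "(a, b) \<in> (adj ends F2)\<^sup>*" using P(5) ab unfolding is_tree_def by blast
    moreover have "F2 = (F2 \<inter> EA) \<union> (F2 \<inter> EB)" using P(3) E_split by blast
    ultimately have p: "(a, b) \<in> (adj ends (F2 \<inter> EA) \<union> adj ends (F2 \<inter> EB))\<^sup>*" by (metis adj_Un)
    have s1: "adj ends (F2 \<inter> EA) \<subseteq> A \<times> A" using EA_ends by (intro adj_sub) blast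
    have s2: "adj ends (F2 \<inter> EB) \<subseteq> B \<times> B" using EA_ends by (intro adj_sub) blast
    have "(a, v) \<in> (adj ends (F2 \<inter> EA))\<^sup>*" using path_split[OF s1 s2 AB p aA] ab by blast
    moreover have "(adj ends (F2 \<inter> EA))\<^sup>* \<subseteq> (adj ends F2)\<^sup>*" by (intro rtrancl_mono adj_mono) blast
    ultimately have "(a, v) \<in> (adj ends F2)\<^sup>*" by blast
    moreover have "\<forall>e\<in>F2. ends e \<subseteq> W2" using P(5) unfolding is_tree_def by blast
    ultimately have "v \<in> W2" using path_stay ab(1) by metis
    then show False using P(9) by blast
  qed
  then show ?thesis using P(1,9) by blast
qed

lemma part_disj:
  assumes Q: "Q \<in> spanning_2forests V E ends"
    and a: "\<exists>(W, F)\<in>Q. v \<notin> W \<and> W \<subseteq> A" and b: "\<exists>(W, F)\<in>Q. v \<notin> W \<and> W \<subseteq> B"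
  shows False
proof -
  have vV: "v \<in> V" using vAB VAB by blast
  obtain W1 F1 W2 F2 where P: "Q = {(W1, F1), (W2, F2)}" "F1 \<subseteq> E" "F2 \<subseteq> E"
      "is_tree ends W1 F1" "is_tree ends W2 F2" "W1 \<inter> W2 = {}" "W1 \<union> W2 = V" "v \<in> W1" "v \<notin> W2"
    using obtain_2f[OF Q vV] by blast
  have "W2 \<subseteq> A" "W2 \<subseteq> B" using a b P(1,8) by auto
  then have "W2 = {}" using AB P(9) by auto
  then show False using P(5) unfolding is_tree_def by blast
qed

lemma fin_2f: "finite (spanning_2forests V E ends)"
proof (rule finite_subset)
  show "spanning_2forests V E ends \<subseteq> Pow (Pow V \<times> Pow E)"
    unfolding spanning_2forests_def by blast
  show "finite (Pow (Pow V \<times> Pow E))" using finV finE by simp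
qed
end


theorem mainTheorem10:
  fixes V :: "'v set" and E :: "'e set" and ends :: "'e \<Rightarrow> 'v set"
    and \<rho> :: "'v \<Rightarrow> real^4" and m \<alpha> :: "'e \<Rightarrow> real"
    and X A B :: "'v set" and v x1 x2 x3 x4 :: 'v
  assumes G: "wf_graph V E ends"
    and massless: "\<forall>e\<in>E. m e = 0"
    and X: "X = {x1, x2, x3, x4}" "distinct [x1, x2, x3, x4]" "X \<subseteq> V"
    and ext: "\<forall>u. u \<notin> X \<longrightarrow> \<rho> u = 0"
    and cons: "(\<Sum>u\<in>V. \<rho> u) = 0"
    and onshell: "\<forall>x\<in>X. mink_sq (\<rho> x) = 0"
    and sep: "one_separation V E ends A B" "A \<inter> B = {v}"
    and XA: "X \<inter> (A - {v}) = {x1, x2}"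
    and XB: "X \<inter> (B - {v}) = {x3, x4}"
  shows "phi V E ends \<rho> m \<alpha> =
      phi A (induced_edges E ends A) ends (\<rho>(v := \<rho> x3 + \<rho> x4)) m \<alpha>
        * psi B (induced_edges E ends B) ends \<alpha>
    + phi B (induced_edges E ends B) ends (\<rho>(v := \<rho> x1 + \<rho> x2)) m \<alpha>
        * psi A (induced_edges E ends A) ends \<alpha>"
proof -
  have finV: "finite V" and finE: "finite E" and wfE: "\<forall>e\<in>E. ends e \<subseteq> V \<and> card (ends e) = 2"
    using G unfolding wf_graph_def by auto
  have VAB: "V = A \<union> B" using sep(1) unfolding one_separation_def by auto
  have nocross: "\<not> (\<exists>e\<in>E. \<exists>a\<in>A - B. \<exists>b\<in>B - A. ends e = {a, b})"
    using sep(1) unfolding one_separation_def by auto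
  have splitE: "\<forall>e\<in>E. ends e \<subseteq> A \<or> ends e \<subseteq> B"
  proof
    fix e assume e: "e \<in> E"
    then obtain a b where ab: "ends e = {a, b}" "a \<noteq> b" using wfE by (meson card_2_iff)
    have abV: "a \<in> V" "b \<in> V" using wfE e ab by auto
    show "ends e \<subseteq> A \<or> ends e \<subseteq> B"
    proof (rule ccontr)
      assume "\<not> (ends e \<subseteq> A \<or> ends e \<subseteq> B)"
      then have "(a \<in> A - B \<and> b \<in> B - A) \<or> (b \<in> A - B \<and> a \<in> B - A)"
        using ab abV VAB by auto
      then show False using nocross e ab by (metis insert_commute)
    qed
  qed
  interpret s1: sepctx V E ends A B v
    using finV finE wfE VAB sep(2) splitE by unfold_locales auto
  interpret s2: sepctx V E ends B A v
    using finV finE wfE VAB sep(2) splitE by unfold_locales auto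
  define QA where "QA = {Q\<in>spanning_2forests V E ends. \<exists>(W, F)\<in>Q. v \<notin> W \<and> W \<subseteq> A}"
  define QB where "QB = {Q\<in>spanning_2forests V E ends. \<exists>(W, F)\<in>Q. v \<notin> W \<and> W \<subseteq> B}"
  have QU: "spanning_2forests V E ends = QA \<union> QB" unfolding QA_def QB_def using s1.part_cover by blast
  have QI: "QA \<inter> QB = {}" unfolding QA_def QB_def using s1.part_disj by blast
  have finQ: "finite QA" "finite QB" using s1.fin_2f QU by (metis finite_Un)+
  have mA: "\<forall>e\<in>induced_edges E ends A. m e = 0" "\<forall>e\<in>induced_edges E ends B. m e = 0"
    using massless s1.EA_sub by blast+
  have x12: "x1 \<noteq> x2" "x3 \<noteq> x4" using X(2) by auto
  have sX: "(\<Sum>u\<in>V. \<rho> u) = \<rho> x1 + \<rho> x2 + \<rho> x3 + \<rho> x4"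
  proof -
    have "(\<Sum>u\<in>V. \<rho> u) = (\<Sum>u\<in>X. \<rho> u)"
      using finV X(3) ext by (intro sum.mono_neutral_right) auto
    then show ?thesis using X(1,2) by (simp add: add.assoc)
  qed
  have vA: "v \<in> A" "v \<in> B" using sep(2) by auto
  have finA: "finite A" "finite B" using finV VAB by auto
  have sA: "(\<Sum>u\<in>A. (\<rho>(v := \<rho> x3 + \<rho> x4)) u) = 0"
  proof -
    have "(\<Sum>u\<in>A. (\<rho>(v := \<rho> x3 + \<rho> x4)) u) = (\<rho> x3 + \<rho> x4) + (\<Sum>u\<in>A - {v}. (\<rho>(v := \<rho> x3 + \<rho> x4)) u)"
      using finA vA by (simp add: sum.remove)
    also have "(\<Sum>u\<in>A - {v}. (\<rho>(v := \<rho> x3 + \<rho> x4)) u) = (\<Sum>u\<in>A - {v}. \<rho> u)"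
      by (intro sum.cong) auto
    also have "\<dots> = (\<Sum>u\<in>{x1, x2}. \<rho> u)"
      using finA XA ext by (intro sum.mono_neutral_right) auto
    also have "\<dots> = \<rho> x1 + \<rho> x2" using x12 by simp
    finally show ?thesis using sX cons by (simp add: algebra_simps)
  qed
  have sB: "(\<Sum>u\<in>B. (\<rho>(v := \<rho> x1 + \<rho> x2)) u) = 0"
  proof -
    have "(\<Sum>u\<in>B. (\<rho>(v := \<rho> x1 + \<rho> x2)) u) = (\<rho> x1 + \<rho> x2) + (\<Sum>u\<in>B - {v}. (\<rho>(v := \<rho> x1 + \<rho> x2)) u)"
      using finA vA by (simp add: sum.remove)
    also have "(\<Sum>u\<in>B - {v}. (\<rho>(v := \<rho> x1 + \<rho> x2)) u) = (\<Sum>u\<in>B - {v}. \<rho> u)"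
      by (intro sum.cong) auto
    also have "\<dots> = (\<Sum>u\<in>{x3, x4}. \<rho> u)"
      using finA XB ext by (intro sum.mono_neutral_right) auto
    also have "\<dots> = \<rho> x3 + \<rho> x4" using x12 by simp
    finally show ?thesis using sX cons by (simp add: algebra_simps)
  qed
  have hA: "(\<Sum>Q\<in>QA. w2 E ends \<rho> \<alpha> Q) =
     phi A (induced_edges E ends A) ends (\<rho>(v := \<rho> x3 + \<rho> x4)) m \<alpha> * psi B (induced_edges E ends B) ends \<alpha>"
    unfolding QA_def phi_eq[OF mA(1)] by (rule s1.half[OF cons sA]) simp
  have hB: "(\<Sum>Q\<in>QB. w2 E ends \<rho> \<alpha> Q) =
     phi B (induced_edges E ends B) ends (\<rho>(v := \<rho> x1 + \<rho> x2)) m \<alpha> * psi A (induced_edges E ends A) ends \<alpha>"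
    unfolding QB_def phi_eq[OF mA(2)] by (rule s2.half[OF cons sB]) simp
  have "phi V E ends \<rho> m \<alpha> = (\<Sum>Q\<in>QA \<union> QB. w2 E ends \<rho> \<alpha> Q)"
    unfolding phi_eq[OF massless] QU ..
  also have "\<dots> = (\<Sum>Q\<in>QA. w2 E ends \<rho> \<alpha> Q) + (\<Sum>Q\<in>QB. w2 E ends \<rho> \<alpha> Q)"
    using finQ QI by (rule sum.union_disjoint[OF _ _ ])
  finally show ?thesis using hA hB by simp
qed

end
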